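(* Let $(X,\phi)$ be a ranked convex geometry with critical base $\Sigma$, and let $j\in X$. Let $\mathrm{pred}(j)=\{a\in X:\exists A\to j\in\Sigma,\ a\in A\}$ and let $\mathcal{H}_j$ be the hypergraph with vertex set $X\setminus\bigcap_{M\in j^{\nearrow}}M$ and edge set $\{X\setminus M: M\in j^{\nearrow}\}$. Then a set $A\subseteq X$ is a critical minimal generator of $j$ if and only if $A\in Tr(\mathcal{H}_j[\mathrm{pred}(j)])$.
   Context: $X$ is finite. A closure operator $\phi$ on $X$ is extensive, monotone and idempotent; $(X,\phi)$ is standard if $\phi(\emptyset)=\emptyset$ and $\phi(\{x\})\setminus\{x\}$ is closed for all $x$. A unit implicational base $\Sigma$ (implications $A\to b$, $A\subseteq X$, $b\in X$) is an implicational base of $(X,\phi)$ if its closed sets (sets $S$ with $A\not\subseteq S$ or $b\in S$ for each $A\to b\in\Sigma$) are exactly the closed sets of $\phi$. $\Sigma$ is ranked if there is $\rho:X\to\mathbb{N}$ with $\rho(a)=\rho(b)+1$ whenever $A\to b\in\Sigma$ and $a\in A$. A ranked convex geometry is a standard closure space admitting a ranked implicational base. $A$ is a minimal generator of $b$ if $b\in\phi(A)$ and $b\notin\phi(A\setminus\{x\})$ for all $x\in A$. The critical base is the unique irredundant implicational base all of whose implications $A\to b$ have $A$ a minimal generator of $b$; a minimal generator $A$ of $b$ is critical if $A\to b$ belongs to the critical base. For $j\in X$, $j^{\nearrow}$ is the set of inclusion-maximal closed sets not containing $j$. For a hypergraph $\mathcal{H}$ and $S\subseteq V(\mathcal{H})$,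 the induced hypergraph $\mathcal{H}[S]$ has vertex set $S$ and edge set $\{E\cap S: E\in\mathcal{E}(\mathcal{H})\}$; $Tr(\mathcal{H})$ is the set of inclusion-minimal vertex sets intersecting every edge. *)

theory Defs
  imports Main
begin

definition closure_operator :: "'a set \<Rightarrow> ('a set \<Rightarrow> 'a set) \<Rightarrow> bool" where
  "closure_operator X phi \<longleftrightarrow>
     (\<forall>A. A \<subseteq> X \<longrightarrow> A \<subseteq> phi A \<and> phi A \<subseteq> X) \<and>
     (\<forall>A B. A \<subseteq> B \<and> B \<subseteq> X \<longrightarrow> phi A \<subseteq> phi B) \<and>
     (\<forall>A. A \<subseteq> X \<longrightarrow> phi (phi A) = phi A)"

definition is_closed :: "'a set \<Rightarrow> ('a set \<Rightarrow> 'a set) \<Rightarrow> 'a set \<Rightarrow> bool" where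
  "is_closed X phi S \<longleftrightarrow> S \<subseteq> X \<and> phi S = S"

definition standard :: "'a set \<Rightarrow> ('a set \<Rightarrow> 'a set) \<Rightarrow> bool" where
  "standard X phi \<longleftrightarrow> closure_operator X phi \<and> phi {} = {} \<and>
     (\<forall>x\<in>X. is_closed X phi (phi {x} - {x}))"

text \<open>Unit implications A \<rightarrow> b are encoded as pairs (A, b).\<close>
definition unit_base :: "'a set \<Rightarrow> ('a set \<times> 'a) set \<Rightarrow> bool" where
  "unit_base X \<Sigma> \<longleftrightarrow> (\<forall>(A, b)\<in>\<Sigma>. A \<subseteq> X \<and> b \<in> X)"

definition base_closed :: "'a set \<Rightarrow> ('a set \<times> 'a) set \<Rightarrow> 'a set \<Rightarrow> bool" where
  "base_closed X \<Sigma> S \<longleftrightarrow> S \<subseteq> X \<and> (\<forall>(A, b)\<in>\<Sigma>. \<not> A \<subseteq> S \<or> b \<in> S)"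

definition implicational_base ::
  "'a set \<Rightarrow> ('a set \<Rightarrow> 'a set) \<Rightarrow> ('a set \<times> 'a) set \<Rightarrow> bool" where
  "implicational_base X phi \<Sigma> \<longleftrightarrow> unit_base X \<Sigma> \<and>
     (\<forall>S. base_closed X \<Sigma> S \<longleftrightarrow> is_closed X phi S)"

definition ranked :: "('a set \<times> 'a) set \<Rightarrow> bool" where
  "ranked \<Sigma> \<longleftrightarrow> (\<exists>\<rho> :: 'a \<Rightarrow> nat. \<forall>(A, b)\<in>\<Sigma>. \<forall>a\<in>A. \<rho> a = \<rho> b + 1)"

definition ranked_convex_geometry :: "'a set \<Rightarrow> ('a set \<Rightarrow> 'a set) \<Rightarrow> bool" where
  "ranked_convex_geometry X phi \<longleftrightarrow> finite X \<and> standard X phi \<and>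
     (\<exists>\<Sigma>. implicational_base X phi \<Sigma> \<and> ranked \<Sigma>)"

definition minimal_generator ::
  "'a set \<Rightarrow> ('a set \<Rightarrow> 'a set) \<Rightarrow> 'a set \<Rightarrow> 'a \<Rightarrow> bool" where
  "minimal_generator X phi A b \<longleftrightarrow> A \<subseteq> X \<and> b \<in> phi A \<and> (\<forall>x\<in>A. b \<notin> phi (A - {x}))"

definition irredundant_base ::
  "'a set \<Rightarrow> ('a set \<Rightarrow> 'a set) \<Rightarrow> ('a set \<times> 'a) set \<Rightarrow> bool" where
  "irredundant_base X phi \<Sigma> \<longleftrightarrow> implicational_base X phi \<Sigma> \<and>
     (\<forall>\<sigma>\<in>\<Sigma>. \<not> implicational_base X phi (\<Sigma> - {\<sigma>}))"

definition critical_base ::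
  "'a set \<Rightarrow> ('a set \<Rightarrow> 'a set) \<Rightarrow> ('a set \<times> 'a) set \<Rightarrow> bool" where
  "critical_base X phi \<Sigma> \<longleftrightarrow> irredundant_base X phi \<Sigma> \<and>
     (\<forall>(A, b)\<in>\<Sigma>. minimal_generator X phi A b)"

definition critical_minimal_generator ::
  "'a set \<Rightarrow> ('a set \<Rightarrow> 'a set) \<Rightarrow> ('a set \<times> 'a) set \<Rightarrow> 'a set \<Rightarrow> 'a \<Rightarrow> bool" where
  "critical_minimal_generator X phi \<Sigma> A b \<longleftrightarrow> minimal_generator X phi A b \<and> (A, b) \<in> \<Sigma>"

text \<open>j-up-arrow: inclusion-maximal closed sets not containing j.\<close>
definition max_closed_avoiding :: "'a set \<Rightarrow> ('a set \<Rightarrow> 'a set) \<Rightarrow> 'a \<Rightarrow> 'a set set" where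
  "max_closed_avoiding X phi j = {M. is_closed X phi M \<and> j \<notin> M \<and>
     (\<forall>M'. is_closed X phi M' \<and> j \<notin> M' \<and> M \<subseteq> M' \<longrightarrow> M' = M)}"

definition pred :: "('a set \<times> 'a) set \<Rightarrow> 'a \<Rightarrow> 'a set" where
  "pred \<Sigma> j = {a. \<exists>A. (A, j) \<in> \<Sigma> \<and> a \<in> A}"

text \<open>Hypergraphs as (vertex set, edge set).\<close>
type_synonym 'a hypergraph = "'a set \<times> 'a set set"

definition induced_hypergraph :: "'a hypergraph \<Rightarrow> 'a set \<Rightarrow> 'a hypergraph" where
  "induced_hypergraph H S = (S, {E \<inter> S | E. E \<in> snd H})"

definition hits_all :: "'a hypergraph \<Rightarrow> 'a set \<Rightarrow> bool" where
  "hits_all H T \<longleftrightarrow> T \<subseteq> fst H \<and> (\<forall>E\<in>snd H. T \<inter> E \<noteq> {})"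

definition Tr :: "'a hypergraph \<Rightarrow> 'a set set" where
  "Tr H = {T. hits_all H T \<and> (\<forall>T'. T' \<subset> T \<longrightarrow> \<not> hits_all H T')}"

definition H_j :: "'a set \<Rightarrow> ('a set \<Rightarrow> 'a set) \<Rightarrow> 'a \<Rightarrow> 'a hypergraph" where
  "H_j X phi j = (X - \<Inter> (max_closed_avoiding X phi j),
                  {X - M | M. M \<in> max_closed_avoiding X phi j})"

end

theory Submission
  imports Defs
begin

locale rcg =
  fixes X :: "'a set" and phi :: "'a set \<Rightarrow> 'a set"
    and S' :: "('a set \<times> 'a) set" and rho :: "'a \<Rightarrow> nat"
    and \<Sigma> :: "('a set \<times> 'a) set"
  assumes finX: "finite X"
    and clo: "closure_operator X phi"
    and empt: "phi {} = {}"
    and baseS': "implicational_base X phi S'"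
    and rk: "\<forall>(C, b)\<in>S'. \<forall>a\<in>C. rho a = rho b + 1"
    and crit: "critical_base X phi \<Sigma>"
begin

lemma c1: "\<forall>A. A \<subseteq> X \<longrightarrow> A \<subseteq> phi A \<and> phi A \<subseteq> X"
  using clo unfolding closure_operator_def by (elim conjE)
lemma c2: "\<forall>A B. A \<subseteq> B \<and> B \<subseteq> X \<longrightarrow> phi A \<subseteq> phi B"
  using clo unfolding closure_operator_def by (elim conjE)
lemma c3: "\<forall>A. A \<subseteq> X \<longrightarrow> phi (phi A) = phi A"
  using clo unfolding closure_operator_def by (elim conjE)

lemma ext: "A \<subseteq> X \<Longrightarrow> A \<subseteq> phi A" using c1 by simp
lemma subX: "A \<subseteq> X \<Longrightarrow> phi A \<subseteq> X" using c1 by simp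
lemma mono: "A \<subseteq> B \<Longrightarrow> B \<subseteq> X \<Longrightarrow> phi A \<subseteq> phi B"
  using c2 by simp
lemma idem: "A \<subseteq> X \<Longrightarrow> phi (phi A) = phi A"
  using c3 by simp

lemma cl_closed: "A \<subseteq> X \<Longrightarrow> is_closed X phi (phi A)"
  using subX idem unfolding is_closed_def by blast

lemma cl_least: "A \<subseteq> T \<Longrightarrow> is_closed X phi T \<Longrightarrow> phi A \<subseteq> T"
  using mono unfolding is_closed_def by metis

lemma base_step:
  assumes ib: "implicational_base X phi B0" and "S \<subseteq> X" "x \<in> phi S" "x \<notin> S"
  shows "\<exists>C. (C, x) \<in> B0 \<and> C \<subseteq> phi S - {x}"
proof (rule ccontr)
  assume nc: "\<not> ?thesis"
  have "base_closed X B0 (phi S)" using ib cl_closed[OF \<open>S \<subseteq> X\<close>]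
    unfolding implicational_base_def by blast
  hence "base_closed X B0 (phi S - {x})" using nc unfolding base_closed_def by fast
  hence "is_closed X phi (phi S - {x})" using ib unfolding implicational_base_def by blast
  moreover have "S \<subseteq> phi S - {x}" using ext[OF \<open>S \<subseteq> X\<close>] \<open>x \<notin> S\<close> by blast
  ultimately have "phi S \<subseteq> phi S - {x}" using cl_least by blast
  thus False using \<open>x \<in> phi S\<close> by blast
qed

lemma imp_valid:
  assumes ib: "implicational_base X phi B0" and "(C, b) \<in> B0"
  shows "b \<in> phi C"
proof -
  have CX: "C \<subseteq> X" using ib assms(2) unfolding implicational_base_def unit_base_def by blast
  have "base_closed X B0 (phi C)" using ib cl_closed[OF CX] unfolding implicational_base_def by blast
  thus ?thesis using ext[OF CX] assms(2) unfolding base_closed_def by blast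
qed

lemma S'_closed_iff: "base_closed X S' T \<longleftrightarrow> is_closed X phi T"
  using baseS' unfolding implicational_base_def by blast

lemma L_low:
  assumes "A \<subseteq> X" "\<forall>a\<in>A. rho a = k"
  shows "phi A \<subseteq> A \<union> {x. rho x < k}"
proof -
  let ?U = "A \<union> {x\<in>X. rho x < k}"
  have "base_closed X S' ?U"
    unfolding base_closed_def
  proof (intro conjI ballI)
    show "?U \<subseteq> X" using assms by blast
    fix p assume p: "p \<in> S'"
    obtain C b where pcb: "p = (C, b)" by fastforce
    have bX: "b \<in> X" using baseS' p pcb unfolding implicational_base_def unit_base_def by blast
    have "\<not> C \<subseteq> ?U \<or> b \<in> ?U"
    proof (rule ccontr)
      assume h: "\<not> (\<not> C \<subseteq> ?U \<or> b \<in> ?U)"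
      show False
      proof (cases "C = {}")
        case True
        then show ?thesis using imp_valid[OF baseS'] p pcb empt by fastforce
      next
        case False
        then obtain a where a: "a \<in> C" by blast
        have "rho a = rho b + 1" using rk p pcb a by fastforce
        moreover have "rho b \<ge> k" using h bX by auto
        ultimately show False using h a assms(2) by fastforce
      qed
    qed
    thus "case p of (C, b) \<Rightarrow> \<not> C \<subseteq> ?U \<or> b \<in> ?U" using pcb by simp
  qed
  hence "is_closed X phi ?U" using S'_closed_iff by blast
  hence "phi A \<subseteq> ?U" using cl_least by blast
  thus ?thesis by blast
qed

lemma closed_imp:
  assumes "implicational_base X phi B0" "is_closed X phi T" "(C, b) \<in> B0" "C \<subseteq> T"
  shows "b \<in> T"
proof -
  have "base_closed X B0 T" using assms(1,2) unfolding implicational_base_def by blast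
  thus ?thesis using assms(3,4) unfolding base_closed_def by fastforce
qed

lemma baseSig: "implicational_base X phi \<Sigma>"
  using crit unfolding critical_base_def irredundant_base_def by blast

lemma mgSig: "(B, b) \<in> \<Sigma> \<Longrightarrow> minimal_generator X phi B b"
  using crit unfolding critical_base_def by fastforce

lemma L1:
  assumes SX: "S \<subseteq> X" and xin: "x \<in> phi S" and xS: "x \<notin> S"
  shows "x \<in> phi (S \<inter> {y. rho y > rho x})"
proof (rule ccontr)
  let ?S0 = "S \<inter> {y. rho y > rho x}"
  let ?W = "phi ?S0 \<union> ({y\<in>X. rho y \<le> rho x} - {x})"
  assume nx: "x \<notin> phi ?S0"
  have S0X: "?S0 \<subseteq> X" using SX by blast
  have WX: "?W \<subseteq> X" using subX[OF S0X] by blast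
  have cS0: "is_closed X phi (phi ?S0)" using cl_closed[OF S0X] .
  have "base_closed X S' ?W"
    unfolding base_closed_def
  proof (intro conjI ballI)
    show "?W \<subseteq> X" using WX .
    fix p assume p: "p \<in> S'"
    obtain C b where pcb: "p = (C, b)" by fastforce
    have bX: "b \<in> X" using baseS' p pcb unfolding implicational_base_def unit_base_def by blast
    have rkC: "\<forall>a\<in>C. rho a = rho b + 1" using rk p pcb by fastforce
    have "\<not> C \<subseteq> ?W \<or> b \<in> ?W"
    proof (cases "rho b < rho x \<or> (rho b = rho x \<and> b \<noteq> x)")
      case True
      then show ?thesis using bX by auto
    next
      case False
      hence ge: "rho b \<ge> rho x" by auto
      show ?thesis
      proof (cases "C \<subseteq> ?W")
        case False then show ?thesis by blast
      next
        case True
        hence CW: "C \<subseteq> ?W" by blast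
        have "C \<subseteq> phi ?S0"
        proof
          fix a assume a: "a \<in> C"
          have "rho a = rho b + 1" using rkC a by blast
          thus "a \<in> phi ?S0" using CW a ge by auto
        qed
        hence "b \<in> phi ?S0" using closed_imp[OF baseS' cS0] p pcb by blast
        thus ?thesis by blast
      qed
    qed
    thus "case p of (C, b) \<Rightarrow> \<not> C \<subseteq> ?W \<or> b \<in> ?W" using pcb by simp
  qed
  hence cW: "is_closed X phi ?W" using S'_closed_iff by blast
  have "S \<subseteq> ?W"
  proof
    fix s assume s: "s \<in> S"
    show "s \<in> ?W"
    proof (cases "rho s > rho x")
      case True
      hence "s \<in> ?S0" using s by blast
      thus ?thesis using ext[OF S0X] by blast
    next
      case False
      thus ?thesis using s SX xS by auto
    qed
  qed
  hence "phi S \<subseteq> ?W" using cl_least cW by blast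
  thus False using xin nx by blast
qed

lemma L1':
  assumes mg: "minimal_generator X phi B x" and xB: "x \<notin> B"
  shows "B \<subseteq> {y. rho y > rho x}"
proof
  fix b assume b: "b \<in> B"
  show "b \<in> {y. rho y > rho x}"
  proof (rule ccontr)
    assume "b \<notin> {y. rho y > rho x}"
    hence sub: "B \<inter> {y. rho y > rho x} \<subseteq> B - {b}" by blast
    have BX: "B \<subseteq> X" using mg unfolding minimal_generator_def by blast
    have "x \<in> phi (B \<inter> {y. rho y > rho x})"
      using L1[OF BX _ xB] mg unfolding minimal_generator_def by blast
    hence "x \<in> phi (B - {b})" using mono[OF sub] BX by blast
    thus False using mg b unfolding minimal_generator_def by blast
  qed
qed

lemma irred:
  assumes "(B, j) \<in> \<Sigma>"
  shows "\<exists>S. base_closed X (\<Sigma> - {(B, j)}) S \<and> B \<subseteq> S \<and> j \<notin> S \<and> S \<subseteq> X"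
proof -
  have ni: "\<not> implicational_base X phi (\<Sigma> - {(B, j)})"
    using crit assms unfolding critical_base_def irredundant_base_def by blast
  have "unit_base X (\<Sigma> - {(B, j)})" using baseSig
    unfolding implicational_base_def unit_base_def by blast
  with ni obtain S where S: "\<not> (base_closed X (\<Sigma> - {(B, j)}) S \<longleftrightarrow> is_closed X phi S)"
    unfolding implicational_base_def by blast
  have "is_closed X phi S \<Longrightarrow> base_closed X (\<Sigma> - {(B, j)}) S"
    using baseSig unfolding implicational_base_def base_closed_def by blast
  with S have bc: "base_closed X (\<Sigma> - {(B, j)}) S" and nc: "\<not> is_closed X phi S" by blast+
  have "\<not> base_closed X \<Sigma> S" using nc baseSig unfolding implicational_base_def by blast
  hence "B \<subseteq> S \<and> j \<notin> S" using bc unfolding base_closed_def by blast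
  thus ?thesis using bc unfolding base_closed_def by blast
qed

lemma Lnot:
  assumes "(B, j) \<in> \<Sigma>"
  shows "j \<notin> B"
  using irred[OF assms] by blast

lemma Lhigh:
  assumes BS: "(B, j) \<in> \<Sigma>" and aB: "a \<in> B"
  shows "rho a = rho j + 1"
proof (rule ccontr)
  assume ne: "rho a \<noteq> rho j + 1"
  have mgB: "minimal_generator X phi B j" using mgSig[OF BS] .
  have jB: "j \<notin> B" using Lnot[OF BS] .
  have hi: "B \<subseteq> {y. rho y > rho j}" using L1'[OF mgB jB] .
  hence a2: "rho a \<ge> rho j + 2" using aB ne by fastforce
  obtain S where bc: "base_closed X (\<Sigma> - {(B, j)}) S" and BSs: "B \<subseteq> S" and jS: "j \<notin> S"
    and SX: "S \<subseteq> X" using irred[OF BS] by blast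
  let ?Z = "(S \<inter> {y. rho y > rho j}) \<union> ({y\<in>X. rho y \<le> rho j} - {j})"
  have ZX: "?Z \<subseteq> X" using SX by blast
  have BZ: "B \<subseteq> ?Z" using BSs hi by blast
  have jZ: "j \<notin> ?Z" using jS by blast
  have jX: "j \<in> X" using baseSig BS unfolding implicational_base_def unit_base_def by blast
  have "base_closed X \<Sigma> (insert j ?Z)"
    unfolding base_closed_def
  proof (intro conjI ballI)
    show "insert j ?Z \<subseteq> X" using ZX jX by blast
    fix p assume p: "p \<in> \<Sigma>"
    obtain C x where pcb: "p = (C, x)" by fastforce
    have xX: "x \<in> X" using baseSig p pcb unfolding implicational_base_def unit_base_def by blast
    have "\<not> C \<subseteq> insert j ?Z \<or> x \<in> insert j ?Z"
    proof (cases "x \<in> C")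
      case True
      then show ?thesis by blast
    next
      case False
      have Chi: "C \<subseteq> {y. rho y > rho x}" using L1'[OF mgSig False] p pcb by blast
      show ?thesis
      proof (cases "rho x \<le> rho j")
        case True
        then show ?thesis using xX by blast
      next
        case False
        show ?thesis
        proof (cases "C \<subseteq> insert j ?Z")
          case False then show ?thesis by blast
        next
          case True
          hence "C \<subseteq> insert j ?Z" by blast
          hence CS: "C \<subseteq> S" using Chi False by fastforce
          have "(C, x) \<in> \<Sigma> - {(B, j)}" using p pcb False by auto
          hence "x \<in> S" using bc CS unfolding base_closed_def by blast
          thus ?thesis using \<open>\<not> rho x \<le> rho j\<close> by auto
        qed
      qed
    qed
    thus "case p of (C, b) \<Rightarrow> \<not> C \<subseteq> insert j ?Z \<or> b \<in> insert j ?Z" using pcb by simp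
  qed
  hence cl: "is_closed X phi (insert j ?Z)" using baseSig unfolding implicational_base_def by blast
  have phZ: "phi ?Z \<subseteq> insert j ?Z" using cl_least[OF _ cl] by blast
  have BX: "B \<subseteq> X" using mgB unfolding minimal_generator_def by blast
  have "j \<in> phi ?Z" using mono[OF BZ ZX] mgB unfolding minimal_generator_def by blast
  then obtain C where CS': "(C, j) \<in> S'" and CZ0: "C \<subseteq> phi ?Z - {j}"
    using base_step[OF baseS' ZX _ jZ] by blast
  have rkC: "\<forall>c\<in>C. rho c = rho j + 1" using rk CS' by fastforce
  have CS: "C \<subseteq> S" using CZ0 phZ rkC by fastforce
  have CX: "C \<subseteq> X" using CS SX by blast
  have jC: "j \<in> phi C" using imp_valid[OF baseS' CS'] .
  have jnC: "j \<notin> C" using rkC by fastforce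
  obtain B' where B'S: "(B', j) \<in> \<Sigma>" and B'C0: "B' \<subseteq> phi C - {j}"
    using base_step[OF baseSig CX jC jnC] by blast
  have low: "phi C \<subseteq> C \<union> {x. rho x < rho j + 1}" using L_low[OF CX rkC] .
  have B'hi: "B' \<subseteq> {y. rho y > rho j}" using L1'[OF mgSig[OF B'S] Lnot[OF B'S]] .
  have B'C: "B' \<subseteq> C" using B'C0 low B'hi by fastforce
  have "B' \<noteq> B" using B'C rkC aB a2 by fastforce
  hence "(B', j) \<in> \<Sigma> - {(B, j)}" using B'S by blast
  hence "j \<in> S" using bc B'C CS unfolding base_closed_def by blast
  thus False using jS by blast
qed

lemma maxM:
  assumes cT: "is_closed X phi T" and jT: "j \<notin> T"
  shows "\<exists>M\<in>max_closed_avoiding X phi j. T \<subseteq> M"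
proof -
  let ?F = "{M. is_closed X phi M \<and> j \<notin> M \<and> T \<subseteq> M}"
  have "?F \<subseteq> Pow X" unfolding is_closed_def by auto
  hence fin: "finite ?F" using finX by (simp add: finite_subset)
  have "T \<in> ?F" using cT jT by simp
  then obtain m where m: "m \<in> ?F" and mx: "\<forall>b\<in>?F. m \<subseteq> b \<longrightarrow> m = b"
    using finite_has_maximal2[OF fin \<open>T \<in> ?F\<close>] by auto
  have "m \<in> max_closed_avoiding X phi j"
    unfolding max_closed_avoiding_def
  proof (intro CollectI conjI allI impI)
    show "is_closed X phi m" "j \<notin> m" using m by simp_all
    fix M' assume h: "is_closed X phi M' \<and> j \<notin> M' \<and> m \<subseteq> M'"
    hence "M' \<in> ?F" using m by auto
    thus "M' = m" using mx h by auto
  qed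
  thus ?thesis using m by auto
qed

lemma snd_ind: "snd (induced_hypergraph (H_j X phi j) P) =
    {(X - M) \<inter> P | M. M \<in> max_closed_avoiding X phi j}"
  unfolding induced_hypergraph_def H_j_def by auto

lemma fst_ind: "fst (induced_hypergraph H P) = P"
  unfolding induced_hypergraph_def by simp

lemma hits_iff:
  assumes TP: "T \<subseteq> pred \<Sigma> j" and TX: "T \<subseteq> X"
  shows "hits_all (induced_hypergraph (H_j X phi j) (pred \<Sigma> j)) T \<longleftrightarrow> j \<in> phi T"
proof
  assume h: "hits_all (induced_hypergraph (H_j X phi j) (pred \<Sigma> j)) T"
  show "j \<in> phi T"
  proof (rule ccontr)
    assume "j \<notin> phi T"
    then obtain M where M: "M \<in> max_closed_avoiding X phi j" and sM: "phi T \<subseteq> M"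
      using maxM[OF cl_closed[OF TX]] by blast
    have "(X - M) \<inter> pred \<Sigma> j \<in> snd (induced_hypergraph (H_j X phi j) (pred \<Sigma> j))"
      unfolding snd_ind using M by blast
    hence "T \<inter> ((X - M) \<inter> pred \<Sigma> j) \<noteq> {}" using h unfolding hits_all_def by blast
    moreover have "T \<subseteq> M" using sM ext[OF TX] by (rule order_trans[rotated])
    ultimately show False by blast
  qed
next
  assume j: "j \<in> phi T"
  show "hits_all (induced_hypergraph (H_j X phi j) (pred \<Sigma> j)) T"
    unfolding hits_all_def fst_ind
  proof (intro conjI ballI TP)
    fix E assume "E \<in> snd (induced_hypergraph (H_j X phi j) (pred \<Sigma> j))"
    then obtain M where M: "M \<in> max_closed_avoiding X phi j" and E: "E = (X - M) \<inter> pred \<Sigma> j"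
      unfolding snd_ind by blast
    have cM: "is_closed X phi M" and jM: "j \<notin> M" using M unfolding max_closed_avoiding_def by simp_all
    show "T \<inter> E \<noteq> {}"
    proof
      assume "T \<inter> E = {}"
      hence "T \<subseteq> M" using E TP TX by auto
      hence "phi T \<subseteq> M" using cl_least cM by blast
      thus False using j jM by blast
    qed
  qed
qed

lemma predrk: "a \<in> pred \<Sigma> j \<Longrightarrow> rho a = rho j + 1"
  using Lhigh unfolding pred_def by blast

lemma main:
  assumes AX: "A \<subseteq> X"
  shows "(minimal_generator X phi A j \<and> (A, j) \<in> \<Sigma>) \<longleftrightarrow>
         A \<in> Tr (induced_hypergraph (H_j X phi j) (pred \<Sigma> j))"
proof
  assume h: "minimal_generator X phi A j \<and> (A, j) \<in> \<Sigma>"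
  have AP: "A \<subseteq> pred \<Sigma> j" using h unfolding pred_def by blast
  have jA: "j \<in> phi A" using h unfolding minimal_generator_def by blast
  show "A \<in> Tr (induced_hypergraph (H_j X phi j) (pred \<Sigma> j))"
    unfolding Tr_def
  proof (intro CollectI conjI allI impI)
    show "hits_all (induced_hypergraph (H_j X phi j) (pred \<Sigma> j)) A"
      using hits_iff[OF AP AX] jA by blast
    fix T' assume T': "T' \<subset> A"
    show "\<not> hits_all (induced_hypergraph (H_j X phi j) (pred \<Sigma> j)) T'"
    proof
      assume "hits_all (induced_hypergraph (H_j X phi j) (pred \<Sigma> j)) T'"
      hence jT: "j \<in> phi T'" using hits_iff[of T'] T' AP AX by blast
      obtain x where x: "x \<in> A" "x \<notin> T'" using T' by blast
      have "T' \<subseteq> A - {x}" using T' x by blast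
      hence "j \<in> phi (A - {x})" using mono[of T' "A - {x}"] AX jT by blast
      thus False using h x unfolding minimal_generator_def by blast
    qed
  qed
next
  assume "A \<in> Tr (induced_hypergraph (H_j X phi j) (pred \<Sigma> j))"
  hence hA: "hits_all (induced_hypergraph (H_j X phi j) (pred \<Sigma> j)) A"
    and mn: "\<And>T'. T' \<subset> A \<Longrightarrow> \<not> hits_all (induced_hypergraph (H_j X phi j) (pred \<Sigma> j)) T'"
    unfolding Tr_def by blast+
  have AP: "A \<subseteq> pred \<Sigma> j" using hA unfolding hits_all_def induced_hypergraph_def by simp
  have jA: "j \<in> phi A" using hits_iff[OF AP AX] hA by blast
  have mg: "minimal_generator X phi A j"
    unfolding minimal_generator_def
  proof (intro conjI ballI AX jA)
    fix x assume x: "x \<in> A"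
    show "j \<notin> phi (A - {x})"
    proof
      assume "j \<in> phi (A - {x})"
      hence "hits_all (induced_hypergraph (H_j X phi j) (pred \<Sigma> j)) (A - {x})"
        using hits_iff[of "A - {x}"] AP AX by blast
      moreover have "A - {x} \<subset> A" using x by blast
      ultimately show False using mn by blast
    qed
  qed
  have rkA: "\<forall>a\<in>A. rho a = rho j + 1" using AP predrk by blast
  have jnA: "j \<notin> A" using rkA by fastforce
  obtain B where BS: "(B, j) \<in> \<Sigma>" and BA0: "B \<subseteq> phi A - {j}"
    using base_step[OF baseSig AX jA jnA] by blast
  have low: "phi A \<subseteq> A \<union> {x. rho x < rho j + 1}" using L_low[OF AX rkA] .
  have Bhi: "B \<subseteq> {y. rho y > rho j}" using L1'[OF mgSig[OF BS] Lnot[OF BS]] .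
  have BA: "B \<subseteq> A" using BA0 low Bhi by fastforce
  have "B = A"
  proof (rule ccontr)
    assume "B \<noteq> A"
    then obtain x where x: "x \<in> A" "x \<notin> B" using BA by blast
    have "j \<in> phi B" using imp_valid[OF baseSig BS] .
    moreover have "phi B \<subseteq> phi (A - {x})" using mono[of B "A - {x}"] BA x AX by blast
    ultimately show False using mg x unfolding minimal_generator_def by blast
  qed
  thus "minimal_generator X phi A j \<and> (A, j) \<in> \<Sigma>" using mg BS by blast
qed

end

theorem theorem5:
  fixes X :: "'a set" and phi :: "'a set \<Rightarrow> 'a set"
    and \<Sigma> :: "('a set \<times> 'a) set" and j :: 'a and A :: "'a set"
  assumes "ranked_convex_geometry X phi"
    and "critical_base X phi \<Sigma>"
    and "j \<in> X"
    and "A \<subseteq> X"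
  shows "critical_minimal_generator X phi \<Sigma> A j \<longleftrightarrow>
         A \<in> Tr (induced_hypergraph (H_j X phi j) (pred \<Sigma> j))"
proof -
  have finX: "finite X" and std: "standard X phi"
    using assms(1) unfolding ranked_convex_geometry_def by blast+
  obtain S' where bS': "implicational_base X phi S'" and rS': "ranked S'"
    using assms(1) unfolding ranked_convex_geometry_def by blast
  obtain rho :: "'a \<Rightarrow> nat" where rho: "\<forall>(C, b)\<in>S'. \<forall>a\<in>C. rho a = rho b + 1"
    using rS' unfolding ranked_def by blast
  have clo: "closure_operator X phi" and emp: "phi {} = {}"
    using std unfolding standard_def by blast+
  interpret rcg X phi S' rho \<Sigma>
    using finX clo emp bS' rho assms(2) by unfold_locales
  show ?thesis using main[OF assms(4)] unfolding critical_minimal_generator_def .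
qed

end
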